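(* Let $p\in(0,1)$ and let $(\lambda_n)_{n\ge1}$ be a sequence with $\lambda_1=1$ and $0\le\lambda_n\le\lambda_{n-1}$ for all $n>1$. Let $r_1,r_2,\dots$ be $\{0,1\}$-valued random variables with $\Pr(r_1=1)=p$ and, for every $n\ge2$, $\Pr(r_n=1\mid r_1,\dots,r_{n-1})=\lambda_n p+(1-\lambda_n)\bar p_{n-1}$, where $\bar p_m=\frac1m\sum_{i=1}^m r_i$. Then for all integers $1\le m<n$, \[\mathbb{E}[\bar p_n-p\mid\bar p_m]=(\bar p_m-p)\prod_{i=m+1}^{n}\Big(1-\frac{\lambda_i}{i}\Big).\] *)

theory Defs
  imports "HOL-Probability.Probability"
begin

definition gen_alg :: "'a measure \<Rightarrow> (nat \<Rightarrow> 'a \<Rightarrow> real) \<Rightarrow> nat set \<Rightarrow> 'a measure" where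
  "gen_alg M X I = sigma (space M) {X i -` B \<inter> space M | i B. i \<in> I \<and> B \<in> sets borel}"

definition pbar :: "(nat \<Rightarrow> 'a \<Rightarrow> real) \<Rightarrow> nat \<Rightarrow> 'a \<Rightarrow> real" where
  "pbar r m x = (\<Sum>i=1..m. r i x) / real m"

end

theory Submission
  imports Defs
begin

lemma gen_alg_space: "space (gen_alg M X I) = space M"
  unfolding gen_alg_def by (simp add: space_measure_of_conv)

lemma gen_alg_sets: "sets (gen_alg M X I) = sigma_sets (space M) {X i -` B \<inter> space M | i B. i \<in> I \<and> B \<in> sets borel}"
  unfolding gen_alg_def by (rule sets_measure_of) auto

lemma gen_alg_subalg:
  assumes "\<And>i. i \<in> I \<Longrightarrow> X i \<in> borel_measurable M"
  shows "subalgebra M (gen_alg M X I)"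
  unfolding subalgebra_def gen_alg_space gen_alg_sets
  by (auto intro!: sets.sigma_sets_subset measurable_sets assms)

lemma gen_alg_mono:
  assumes "I \<subseteq> J"
  shows "subalgebra (gen_alg M X J) (gen_alg M X I)"
  unfolding subalgebra_def gen_alg_space gen_alg_sets
  using assms by (intro conjI refl sigma_sets_subseteq) blast

lemma gen_alg_meas:
  assumes "i \<in> I"
  shows "X i \<in> borel_measurable (gen_alg M X I)"
proof (rule measurableI)
  fix B :: "real set" assume "B \<in> sets borel"
  then show "X i -` B \<inter> space (gen_alg M X I) \<in> sets (gen_alg M X I)"
    unfolding gen_alg_space gen_alg_sets using assms by (intro sigma_sets.Basic) blast
qed auto

lemma pbar_meas:
  assumes "\<And>i. i \<in> {1..k} \<Longrightarrow> r i \<in> borel_measurable N"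
  shows "pbar r k \<in> borel_measurable N"
proof -
  have "(\<lambda>x. \<Sum>i=1..k. r i x) \<in> borel_measurable N"
    using assms by (intro borel_measurable_sum) auto
  then show ?thesis unfolding pbar_def[abs_def] by measurable
qed

lemma pbar_bound:
  assumes "\<And>i. i \<in> {1..k} \<Longrightarrow> r i x \<in> {0,1}"
  shows "0 \<le> pbar r k x \<and> pbar r k x \<le> 1"
proof -
  have a: "0 \<le> r i x" "r i x \<le> 1" if "i \<in> {1..k}" for i using assms[OF that] by auto
  have "(\<Sum>i=1..k. r i x) \<le> (\<Sum>i=1..k. 1)" by (rule sum_mono) (use a in auto)
  moreover have "0 \<le> (\<Sum>i=1..k. r i x)" by (rule sum_nonneg) (use a in auto)
  ultimately show ?thesis unfolding pbar_def
    by (cases "k = 0") (auto simp: divide_le_eq)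
qed

lemma pbar_Suc:
  assumes "1 \<le> j"
  shows "pbar r (Suc j) x = (real j * pbar r j x + r (Suc j) x) / real (Suc j)"
  using assms unfolding pbar_def by (simp add: sum.cl_ivl_Suc)

lemma alg_helper:
  fixes N P p L :: real
  assumes "N \<noteq> 0"
  shows "(N - 1) / N * P - p + 1 / N * (L * p + (1 - L) * P) = (1 - L / N) * (P - p)"
  using assms by (simp add: field_simps)

lemma sfs:
  assumes "prob_space M" "subalgebra M F"
  shows "sigma_finite_subalgebra M F"
proof -
  interpret prob_space M by fact
  interpret finite_measure_subalgebra M F by unfold_locales (fact assms(2))
  show ?thesis by unfold_locales
qed

theorem propositionA7:
  fixes M :: "'a measure" and r :: "nat \<Rightarrow> 'a \<Rightarrow> real"
    and lam :: "nat \<Rightarrow> real" and p :: real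
  assumes "prob_space M"
    and "0 < p" and "p < 1"
    and "lam 1 = 1"
    and "\<And>n. n > 1 \<Longrightarrow> 0 \<le> lam n \<and> lam n \<le> lam (n - 1)"
    and "\<And>n. n \<ge> 1 \<Longrightarrow> r n \<in> borel_measurable M"
    and "\<And>n x. n \<ge> 1 \<Longrightarrow> x \<in> space M \<Longrightarrow> r n x \<in> {0, 1}"
    and "measure M {x \<in> space M. r 1 x = 1} = p"
    and "\<And>n. n \<ge> 2 \<Longrightarrow>
           AE x in M. real_cond_exp M (gen_alg M r {1..n-1})
                        (indicator {x \<in> space M. r n x = 1}) x
                      = lam n * p + (1 - lam n) * pbar r (n - 1) x"
    and "1 \<le> m" and "m < n"
  shows "AE x in M. real_cond_exp M (vimage_algebra (space M) (pbar r m) borel)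
                      (\<lambda>x. pbar r n x - p) x
                    = (pbar r m x - p) * (\<Prod>i\<in>{m+1..n}. 1 - lam i / real i)"
proof -
  interpret P: prob_space M by fact
  note rmeas = assms(6) and rval = assms(7) and hyp = assms(9)
  define F where "F k = gen_alg M r {1..k}" for k
  define c where "c i = 1 - lam i / real i" for i
  have subF: "subalgebra M (F k)" for k
    unfolding F_def by (rule gen_alg_subalg) (auto intro: rmeas)
  have sfF: "sigma_finite_subalgebra M (F k)" for k by (rule sfs[OF assms(1) subF])
  have monoF: "subalgebra (F j) (F k)" if "k \<le> j" for j k
    unfolding F_def by (rule gen_alg_mono) (use that in auto)
  have rF: "r i \<in> borel_measurable (F k)" if "1 \<le> i" "i \<le> k" for i k
    unfolding F_def by (rule gen_alg_meas) (use that in auto)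
  have pF: "pbar r k \<in> borel_measurable (F k)" for k
    by (rule pbar_meas) (auto intro: rF)
  have pM: "pbar r k \<in> borel_measurable M" for k
    by (rule pbar_meas) (auto intro: rmeas)
  have pb: "0 \<le> pbar r k x \<and> pbar r k x \<le> 1" if "x \<in> space M" for k x
    by (rule pbar_bound) (use rval that in auto)
  have pint: "integrable M (\<lambda>x. pbar r k x - p)" for k
  proof (rule P.integrable_const_bound[where B="1 + \<bar>p\<bar>"])
    show "AE x in M. norm (pbar r k x - p) \<le> 1 + \<bar>p\<bar>"
      using pb by (intro AE_I2) (smt (verit) real_norm_def)
  qed (use pM in measurable)
  have rint: "integrable M (r k)" if "1 \<le> k" for k
  proof (rule P.integrable_const_bound[where B="1"])
    show "AE x in M. norm (r k x) \<le> 1"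
      using rval[OF that] by (intro AE_I2) fastforce
  qed (use rmeas[OF that] in simp)
  have onestep: "AE x in M. real_cond_exp M (F j) (\<lambda>x. pbar r (Suc j) x - p) x
                = c (Suc j) * (pbar r j x - p)" if "1 \<le> j" for j
  proof -
    interpret S: sigma_finite_subalgebra M "F j" by (rule sfF)
    define a where "a x = real j / real (Suc j) * pbar r j x - p" for x
    define b where "b = 1 / real (Suc j)"
    have aF: "a \<in> borel_measurable (F j)" unfolding a_def[abs_def] using pF[of j] by measurable
    have aM: "a \<in> borel_measurable M" unfolding a_def[abs_def] using pM[of j] by measurable
    have aint: "integrable M a"
    proof (rule P.integrable_const_bound[where B="1 + \<bar>p\<bar>"])
      show "AE x in M. norm (a x) \<le> 1 + \<bar>p\<bar>"
      proof (intro AE_I2)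
        fix x assume x: "x \<in> space M"
        define t where "t = real j / real (Suc j)"
        have t: "0 \<le> t" "t \<le> 1" unfolding t_def by auto
        have "0 \<le> t * pbar r j x" "t * pbar r j x \<le> 1"
          using pb[OF x, of j] t mult_left_mono[of "pbar r j x" 1 t]
          by (auto intro: mult_nonneg_nonneg)
        then have "0 \<le> real j / real (Suc j) * pbar r j x" "real j / real (Suc j) * pbar r j x \<le> 1"
          unfolding t_def by blast+
        then show "norm (a x) \<le> 1 + \<bar>p\<bar>" unfolding a_def real_norm_def by linarith
      qed
    qed (rule aM)
    have eq: "pbar r (Suc j) x - p = a x + b * r (Suc j) x" for x
    proof -
      have "pbar r (Suc j) x = (real j * pbar r j x + r (Suc j) x) / real (Suc j)"
        by (rule pbar_Suc[OF that])
      also have "\<dots> = real j / real (Suc j) * pbar r j x + 1 / real (Suc j) * r (Suc j) x"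
        by (simp add: add_divide_distrib)
      finally show ?thesis unfolding a_def b_def by simp
    qed
    have brint: "integrable M (\<lambda>x. b * r (Suc j) x)" using rint[of "Suc j"] by simp
    have e1: "AE x in M. real_cond_exp M (F j) (\<lambda>x. a x + b * r (Suc j) x) x
        = real_cond_exp M (F j) a x + real_cond_exp M (F j) (\<lambda>x. b * r (Suc j) x) x"
      by (rule S.real_cond_exp_add[OF aint brint])
    have e2: "AE x in M. real_cond_exp M (F j) a x = a x"
      by (rule S.real_cond_exp_F_meas[OF aint aF])
    have e3: "AE x in M. real_cond_exp M (F j) (\<lambda>x. b * r (Suc j) x) x = b * real_cond_exp M (F j) (r (Suc j)) x"
      by (rule S.real_cond_exp_cmult) (rule rint, simp)
    have e4: "AE x in M. real_cond_exp M (F j) (r (Suc j)) x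
        = real_cond_exp M (F j) (indicator {x \<in> space M. r (Suc j) x = 1}) x"
    proof (rule S.real_cond_exp_cong)
      show "AE x in M. r (Suc j) x = indicator {x \<in> space M. r (Suc j) x = 1} x"
        using rval[of "Suc j"] by (intro AE_I2) (auto simp: indicator_def)
      show "r (Suc j) \<in> borel_measurable M" by (rule rmeas) simp
      have "{x \<in> space M. r (Suc j) x = 1} \<in> sets M" using rmeas[of "Suc j"] by measurable
      then show "indicator {x \<in> space M. r (Suc j) x = 1} \<in> borel_measurable M" by simp
    qed
    have e5: "AE x in M. real_cond_exp M (F j) (indicator {x \<in> space M. r (Suc j) x = 1}) x
        = lam (Suc j) * p + (1 - lam (Suc j)) * pbar r j x"
      using hyp[of "Suc j"] that unfolding F_def by simp
    have e0: "AE x in M. real_cond_exp M (F j) (\<lambda>x. pbar r (Suc j) x - p) x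
        = real_cond_exp M (F j) (\<lambda>x. a x + b * r (Suc j) x) x"
      by (simp add: eq)
    show ?thesis using e0 e1 e2 e3 e4 e5
    proof eventually_elim
      case (elim x)
      then have "real_cond_exp M (F j) (\<lambda>x. pbar r (Suc j) x - p) x
          = a x + b * (lam (Suc j) * p + (1 - lam (Suc j)) * pbar r j x)" by simp
      also have "\<dots> = c (Suc j) * (pbar r j x - p)"
      proof -
        have "real j = real (Suc j) - 1" by simp
        then show ?thesis
          unfolding a_def b_def c_def using alg_helper[of "real (Suc j)" "pbar r j x" p "lam (Suc j)"]
          by (simp only:)
      qed
      finally show ?case .
    qed
  qed
  interpret Fm: sigma_finite_subalgebra M "F m" by (rule sfF)
  have main: "AE x in M. real_cond_exp M (F m) (\<lambda>x. pbar r j x - p) x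
      = (pbar r m x - p) * (\<Prod>i\<in>{m+1..j}. c i)" if "m \<le> j" for j
    using that
  proof (induction j rule: dec_induct)
    case base
    have "AE x in M. real_cond_exp M (F m) (\<lambda>x. pbar r m x - p) x = pbar r m x - p"
      by (rule Fm.real_cond_exp_F_meas[OF pint]) (use pF[of m] in measurable)
    then show ?case by simp
  next
    case (step j)
    have j1: "1 \<le> j" using step assms(10) by simp
    have s1: "AE x in M. real_cond_exp M (F m) (real_cond_exp M (F j) (\<lambda>x. pbar r (Suc j) x - p)) x
        = real_cond_exp M (F m) (\<lambda>x. pbar r (Suc j) x - p) x"
      by (rule Fm.real_cond_exp_nested_subalg[OF subF monoF[OF step(1)] pint])
    have s2: "AE x in M. real_cond_exp M (F m) (real_cond_exp M (F j) (\<lambda>x. pbar r (Suc j) x - p)) x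
        = real_cond_exp M (F m) (\<lambda>x. c (Suc j) * (pbar r j x - p)) x"
      by (rule Fm.real_cond_exp_cong[OF onestep[OF j1]]) (use pM[of j] in measurable)
    have s3: "AE x in M. real_cond_exp M (F m) (\<lambda>x. c (Suc j) * (pbar r j x - p)) x
        = c (Suc j) * real_cond_exp M (F m) (\<lambda>x. pbar r j x - p) x"
      by (rule Fm.real_cond_exp_cmult[OF pint])
    show ?case using s1 s2 s3 step(3)
    proof eventually_elim
      case (elim x)
      have "{m + 1..Suc j} = insert (Suc j) {m+1..j}" using step(1) by auto
      then have "(\<Prod>i\<in>{m+1..Suc j}. c i) = c (Suc j) * (\<Prod>i\<in>{m+1..j}. c i)" by simp
      with elim show ?case by (simp add: algebra_simps)
    qed
  qed
  define V where "V = vimage_algebra (space M) (pbar r m) borel"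
  have subV: "subalgebra (F m) V"
    unfolding subalgebra_def V_def
  proof
    show "space (vimage_algebra (space M) (pbar r m) borel) = space (F m)"
      using subF[of m] by (simp add: subalgebra_def)
    show "sets (vimage_algebra (space M) (pbar r m) borel) \<subseteq> sets (F m)"
      by (rule sets_image_in_sets) (use subF[of m] pF[of m] in \<open>auto simp: subalgebra_def\<close>)
  qed
  have subMV: "subalgebra M V"
    using subV subF[of m] by (auto simp: subalgebra_def)
  interpret SV: sigma_finite_subalgebra M V by (rule sfs[OF assms(1) subMV])
  have pV: "pbar r m \<in> borel_measurable V"
    unfolding V_def by (rule measurable_vimage_algebra1) simp
  have t1: "AE x in M. real_cond_exp M V (real_cond_exp M (F m) (\<lambda>x. pbar r n x - p)) x
        = real_cond_exp M V (\<lambda>x. pbar r n x - p) x"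
    by (rule SV.real_cond_exp_nested_subalg[OF subF subV pint])
  have t2: "AE x in M. real_cond_exp M V (real_cond_exp M (F m) (\<lambda>x. pbar r n x - p)) x
        = real_cond_exp M V (\<lambda>x. (pbar r m x - p) * (\<Prod>i\<in>{m+1..n}. c i)) x"
  proof (rule SV.real_cond_exp_cong[OF main])
    show "m \<le> n" using assms(11) by simp
    show "real_cond_exp M (F m) (\<lambda>x. pbar r n x - p) \<in> borel_measurable M" by simp
    show "(\<lambda>x. (pbar r m x - p) * prod c {m + 1..n}) \<in> borel_measurable M" using pM[of m] by measurable
  qed
  have t3: "AE x in M. real_cond_exp M V (\<lambda>x. (pbar r m x - p) * (\<Prod>i\<in>{m+1..n}. c i)) x
        = (pbar r m x - p) * (\<Prod>i\<in>{m+1..n}. c i)"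
  proof (rule SV.real_cond_exp_F_meas)
    show "integrable M (\<lambda>x. (pbar r m x - p) * (\<Prod>i\<in>{m+1..n}. c i))"
      using pint[of m] by (rule integrable_mult_left)
    show "(\<lambda>x. (pbar r m x - p) * (\<Prod>i\<in>{m+1..n}. c i)) \<in> borel_measurable V"
      using pV by measurable
  qed
  show ?thesis using t1 t2 t3 unfolding V_def c_def by eventually_elim simp
qed

end
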